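(* Let $d\ge1$, $s>0$. Suppose that to every $n\in\mathbb{N}_0$ and every cube $Q\subset\mathbb{R}^d$ there is associated a number $E_n(Q)\ge 0$ such that: (i) $E_n(\lambda Q)=\lambda^{-2s}E_n(Q)$ for all $\lambda>0$; (ii) $E_n(Q+\mathbf{x})=E_n(Q)$ for all $\mathbf{x}\in\mathbb{R}^d$; (iii) for any finite collection of disjoint cubes $Q_1,\dots,Q_J$ whose union is a cube, $E_n(\bigcup_j Q_j)\ge \min\{\sum_{j=1}^J E_{n_j}(Q_j): (n_j)\in\mathbb{N}_0^J,\ \sum_j n_j=n\}$; (iv) there exists $q\ge 0$ such that $E_n(Q)>0$ for all $n\ge q$ and all cubes $Q$. Then there is a constant $C>0$ independent of $n$ and $Q$ such that $E_n(Q)\ge C|Q|^{-2s/d}n^{1+2s/d}$ for all integers $n\ge q$ and all cubes $Q$.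
   Context: Cubes are (axis-parallel) cubes in $\mathbb{R}^d$; $\lambda Q$ denotes the dilated cube, $|Q|$ its volume. Disjointness of cubes is understood up to boundaries (measure-zero overlaps). *)

theory Defs
  imports "HOL-Analysis.Analysis"
begin

definition is_cube :: "'a::euclidean_space set \<Rightarrow> bool" where
  "is_cube Q \<longleftrightarrow> (\<exists>a r. r > 0 \<and> Q = cbox a (a + r *\<^sub>R One))"

definition dilate :: "real \<Rightarrow> 'a::euclidean_space set \<Rightarrow> 'a set" where
  "dilate l Q = (\<lambda>y. l *\<^sub>R y) ` Q"

definition translate :: "'a::euclidean_space set \<Rightarrow> 'a \<Rightarrow> 'a set" where
  "translate Q x = (\<lambda>y. y + x) ` Q"

end

theory Submission imports Defs begin

lemma power_mean_aux:
  fixes x :: "nat \<Rightarrow> real" and S :: "nat set" and \<alpha> :: real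
  assumes "finite S" "S \<noteq> {}" "\<alpha> \<ge> 1" "\<And>j. j \<in> S \<Longrightarrow> x j > 0"
  shows "(\<Sum>j\<in>S. x j powr \<alpha>) \<ge> real (card S) powr (1 - \<alpha>) * (\<Sum>j\<in>S. x j) powr \<alpha>"
proof -
  have cS: "real (card S) > 0" using assms by (simp add: card_gt_0_iff)
  have "(\<Sum>j\<in>S. (1 / real (card S)) *\<^sub>R x j) powr \<alpha> \<le> (\<Sum>j\<in>S. (1 / real (card S)) * x j powr \<alpha>)"
    by (rule convex_on_sum[OF assms(1,2) powr_convex[OF assms(3)]]) (use assms cS in auto)
  hence "((\<Sum>j\<in>S. x j) / real (card S)) powr \<alpha> \<le> (\<Sum>j\<in>S. x j powr \<alpha>) / real (card S)"
    by (simp add: sum_divide_distrib sum_distrib_left)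
  moreover have "((\<Sum>j\<in>S. x j) / real (card S)) powr \<alpha> = (\<Sum>j\<in>S. x j) powr \<alpha> / real (card S) powr \<alpha>"
    using cS assms by (auto intro!: powr_divide sum_nonneg less_imp_le)
  ultimately have "(\<Sum>j\<in>S. x j) powr \<alpha> / real (card S) powr \<alpha> * real (card S) \<le> (\<Sum>j\<in>S. x j powr \<alpha>)"
    using cS by (simp add: field_simps)
  moreover have "real (card S) powr (1 - \<alpha>) = real (card S) / real (card S) powr \<alpha>"
    using cS by (simp add: powr_diff)
  ultimately show ?thesis by (simp add: field_simps)
qed

lemma eventually_bound:
  fixes \<theta> c \<alpha> :: real
  assumes "\<theta> > 1" "\<alpha> > 0" "c \<ge> 0"
  shows "\<exists>N. \<forall>n\<ge>N. real n \<ge> 2 * c + 1 \<and> \<theta> * (real n - c) powr \<alpha> \<ge> real n powr \<alpha>"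
proof -
  have "(\<lambda>n. \<theta> * (1 - c / real n) powr \<alpha>) \<longlonglongrightarrow> \<theta> * (1 - 0) powr \<alpha>"
    by (intro tendsto_intros tendsto_divide_0[OF tendsto_const] filterlim_real_sequentially) (use assms in auto)
  hence "eventually (\<lambda>n. \<theta> * (1 - c / real n) powr \<alpha> > 1) sequentially"
    using assms by (intro order_tendstoD) auto
  moreover have "eventually (\<lambda>n. real n \<ge> 2 * c + 1) sequentially"
    using filterlim_real_sequentially filterlim_at_top by blast
  ultimately have "eventually (\<lambda>n. real n \<ge> 2 * c + 1 \<and> \<theta> * (real n - c) powr \<alpha> \<ge> real n powr \<alpha>) sequentially"
  proof eventually_elim
    case (elim n)
    have np: "real n > 0" "real n - c \<ge> 0" using elim assms by auto
    have "(real n - c) powr \<alpha> = (1 - c / real n) powr \<alpha> * real n powr \<alpha>"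
    proof -
      have "real n - c = (1 - c / real n) * real n" using np by (simp add: field_simps)
      moreover have "1 - c / real n \<ge> 0" using np by (simp add: field_simps)
      ultimately show ?thesis using np by (simp add: powr_mult)
    qed
    hence "\<theta> * (real n - c) powr \<alpha> = (\<theta> * (1 - c / real n) powr \<alpha>) * real n powr \<alpha>" by simp
    also have "\<dots> \<ge> 1 * real n powr \<alpha>"
      using elim by (intro mult_right_mono) auto
    finally show ?case using elim by simp
  qed
  thus ?thesis by (simp add: eventually_sequentially)
qed

lemma abstract_bound:
  fixes f :: "nat \<Rightarrow> real" and m q :: nat and \<alpha> :: real
  assumes m2: "m \<ge> 2" and a1: "\<alpha> > 1"
    and fnn: "\<And>k. f k \<ge> 0" and fpos: "\<And>k. k \<ge> q \<Longrightarrow> f k > 0"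
    and rec: "\<And>n. \<exists>ns. (\<Sum>j<m. ns j) = n \<and> f n \<ge> real m powr (\<alpha> - 1) * (\<Sum>j<m. f (ns j))"
  shows "\<exists>C>0. \<forall>n\<ge>q. f n \<ge> C * real n powr \<alpha>"
proof -
  define q' where "q' = max q 1"
  define K where "K = real m powr (\<alpha> - 1)"
  define \<theta> where "\<theta> = K * real (m - 1) powr (1 - \<alpha>)"
  have mr: "real m \<ge> 2" using m2 by simp
  have K1: "K > 1" unfolding K_def using mr a1 using powr_less_mono[of 0 "\<alpha> - 1"] by simp
  have "\<theta> = (real m / real (m - 1)) powr (\<alpha> - 1)"
    unfolding \<theta>_def K_def using m2 by (simp add: powr_divide powr_minus_divide powr_diff divide_simps powr_minus)
  hence th1: "\<theta> > 1" using m2 a1 using powr_less_mono[of 0 "\<alpha> - 1"] by simp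
  obtain N where N: "\<And>n. n \<ge> N \<Longrightarrow> real n \<ge> 2 * (real m * real q') + 1 \<and> \<theta> * (real n - real m * real q') powr \<alpha> \<ge> real n powr \<alpha>"
    using eventually_bound[OF th1, of \<alpha> "real m * real q'"] a1 by auto
  define N1 where "N1 = max N q'"
  define C where "C = Min ((\<lambda>k. f k / real k powr \<alpha>) ` {q'..N1})"
  have fin: "finite ((\<lambda>k. f k / real k powr \<alpha>) ` {q'..N1})" by simp
  have ne: "(\<lambda>k. f k / real k powr \<alpha>) ` {q'..N1} \<noteq> {}" unfolding N1_def by auto
  have Cpos: "C > 0" unfolding C_def
    using fin ne by (subst Min_gr_iff) (auto simp: q'_def intro!: divide_pos_pos fpos)
  have base: "f k \<ge> C * real k powr \<alpha>" if "q' \<le> k" "k \<le> N1" for k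
  proof -
    have "C \<le> f k / real k powr \<alpha>" unfolding C_def using that fin by (intro Min_le) auto
    moreover have "real k powr \<alpha> > 0" using that by (simp add: q'_def)
    ultimately show ?thesis by (simp add: field_simps)
  qed
  have main: "q' \<le> n \<longrightarrow> f n \<ge> C * real n powr \<alpha>" for n
  proof (induction n rule: less_induct)
    case (less n)
    show ?case
    proof
      assume qn: "q' \<le> n"
      show "f n \<ge> C * real n powr \<alpha>"
      proof (cases "n \<le> N1")
        case True thus ?thesis using base qn by auto
      next
        case False
        hence nN: "n \<ge> N" unfolding N1_def by auto
        obtain ns where ns: "(\<Sum>j<m. ns j) = n" "f n \<ge> K * (\<Sum>j<m. f (ns j))"
          using rec[of n] unfolding K_def by blast
        have fnp: "f n > 0" using qn fpos unfolding q'_def by auto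
        have lt: "ns j < n" if "j < m" for j
        proof (rule ccontr)
          assume "\<not> ns j < n"
          moreover have "ns j \<le> n" using ns(1) member_le_sum[of j "{..<m}" ns] that by auto
          ultimately have "ns j = n" by simp
          have "f (ns j) \<le> (\<Sum>j<m. f (ns j))" using that fnn by (intro member_le_sum) auto
          hence "f n \<ge> K * f n" using ns(2) \<open>ns j = n\<close> K1 by (smt (verit) mult_left_mono)
          moreover have "1 * f n < K * f n" using K1 fnp by (intro mult_strict_right_mono) auto
          ultimately show False by simp
        qed
        define S where "S = {j\<in>{..<m}. q' \<le> ns j}"
        have Ssub: "S \<subseteq> {..<m}" unfolding S_def by auto
        have finS: "finite S" unfolding S_def by auto
        have IH: "f (ns j) \<ge> C * real (ns j) powr \<alpha>" if "j \<in> S" for j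
          using less[of "ns j"] lt that unfolding S_def by auto
        have "(\<Sum>j<m. f (ns j)) \<ge> (\<Sum>j\<in>S. f (ns j))"
          using Ssub fnn by (intro sum_mono2) auto
        also have "(\<Sum>j\<in>S. f (ns j)) \<ge> (\<Sum>j\<in>S. C * real (ns j) powr \<alpha>)"
          using IH by (intro sum_mono) auto
        finally have A: "f n \<ge> K * C * (\<Sum>j\<in>S. real (ns j) powr \<alpha>)"
          using ns(2) K1 by (simp add: sum_distrib_left[symmetric] mult.assoc) (smt (verit) mult_left_mono)
        have rest: "(\<Sum>j\<in>{..<m} - S. ns j) \<le> m * q'"
        proof -
          have "(\<Sum>j\<in>{..<m} - S. ns j) \<le> (\<Sum>j\<in>{..<m} - S. q')"
            by (intro sum_mono) (auto simp: S_def)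
          also have "\<dots> \<le> m * q'" by (simp add: card_Diff_subset finS Ssub)
          finally show ?thesis .
        qed
        have split: "(\<Sum>j\<in>S. ns j) + (\<Sum>j\<in>{..<m} - S. ns j) = n"
          using ns(1) Ssub sum.subset_diff[of S "{..<m}" ns] by (simp add: add.commute)
        have Nb: "real n \<ge> 2 * (real m * real q') + 1" using N nN by blast
        have sumS: "real (\<Sum>j\<in>S. ns j) \<ge> real n - real m * real q'"
          using split rest by (smt (verit) of_nat_add of_nat_mono of_nat_mult)
        have Sne: "S \<noteq> {}"
        proof
          assume "S = {}"
          hence "real (\<Sum>j\<in>S. ns j) = 0" by simp
          thus False using sumS Nb q'_def by (smt (verit) mult_nonneg_nonneg of_nat_0_le_iff)
        qed
        have pm: "(\<Sum>j\<in>S. real (ns j) powr \<alpha>) \<ge> real (card S) powr (1 - \<alpha>) * (\<Sum>j\<in>S. real (ns j)) powr \<alpha>"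
          using power_mean_aux[OF finS Sne, of \<alpha> "\<lambda>j. real (ns j)"] a1
          by (auto simp: S_def q'_def)
        have cS: "card S \<le> m" using card_mono[OF _ Ssub] by simp
        have cSp: "card S > 0" using finS Sne by (simp add: card_gt_0_iff)
        show ?thesis
        proof (cases "card S = m")
          case True
          hence "S = {..<m}" using Ssub card_subset_eq by (metis card_lessThan finite_lessThan)
          hence sS: "(\<Sum>j\<in>S. real (ns j)) = real n" using ns(1) by (metis of_nat_sum)
          have "K * real (card S) powr (1 - \<alpha>) = 1"
            using True m2 unfolding K_def by (simp add: powr_add[symmetric])
          have "K * C * (\<Sum>j\<in>S. real (ns j) powr \<alpha>) \<ge> K * C * (real (card S) powr (1 - \<alpha>) * (\<Sum>j\<in>S. real (ns j)) powr \<alpha>)"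
            using pm K1 Cpos by (intro mult_left_mono) auto
          also have "K * C * (real (card S) powr (1 - \<alpha>) * (\<Sum>j\<in>S. real (ns j)) powr \<alpha>) = C * (K * real (card S) powr (1 - \<alpha>)) * (\<Sum>j\<in>S. real (ns j)) powr \<alpha>"
            by (simp add: algebra_simps)
          finally have "K * C * (\<Sum>j\<in>S. real (ns j) powr \<alpha>) \<ge> C * real n powr \<alpha>"
            using \<open>K * real (card S) powr (1 - \<alpha>) = 1\<close> sS by simp
          thus ?thesis using A by simp
        next
          case False
          hence cS': "card S \<le> m - 1" using cS by simp
          have "real (card S) powr (1 - \<alpha>) \<ge> real (m - 1) powr (1 - \<alpha>)"
            using cS' cSp a1 by (intro powr_mono2') auto
          hence "K * real (card S) powr (1 - \<alpha>) \<ge> \<theta>" unfolding \<theta>_def using K1 by simp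
          moreover have "(\<Sum>j\<in>S. real (ns j)) powr \<alpha> \<ge> (real n - real m * real q') powr \<alpha>"
            using sumS Nb a1 by (intro powr_mono2) (auto simp: q'_def)
          ultimately have "K * real (card S) powr (1 - \<alpha>) * (\<Sum>j\<in>S. real (ns j)) powr \<alpha> \<ge> \<theta> * (real n - real m * real q') powr \<alpha>"
            using th1 by (intro mult_mono) auto
          also have "\<theta> * (real n - real m * real q') powr \<alpha> \<ge> real n powr \<alpha>" using N nN by blast
          finally have "K * real (card S) powr (1 - \<alpha>) * (\<Sum>j\<in>S. real (ns j)) powr \<alpha> \<ge> real n powr \<alpha>" .
          moreover have "K * (\<Sum>j\<in>S. real (ns j) powr \<alpha>) \<ge> K * (real (card S) powr (1 - \<alpha>) * (\<Sum>j\<in>S. real (ns j)) powr \<alpha>)"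
            using pm K1 by (intro mult_left_mono) auto
          ultimately have "K * (\<Sum>j\<in>S. real (ns j) powr \<alpha>) \<ge> real n powr \<alpha>"
            by (simp add: mult.assoc)
          hence "C * (K * (\<Sum>j\<in>S. real (ns j) powr \<alpha>)) \<ge> C * real n powr \<alpha>"
            using Cpos by (intro mult_left_mono) auto
          hence "K * C * (\<Sum>j\<in>S. real (ns j) powr \<alpha>) \<ge> C * real n powr \<alpha>"
            by (simp add: algebra_simps)
          thus ?thesis using A by simp
        qed
      qed
    qed
  qed
  show ?thesis
  proof (intro exI[of _ C] conjI allI impI Cpos)
    fix n assume "q \<le> n"
    show "f n \<ge> C * real n powr \<alpha>"
    proof (cases "n = 0")
      case True thus ?thesis using fnn by simp
    next
      case False thus ?thesis using main[of n] \<open>q \<le> n\<close> by (simp add: q'_def)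
    qed
  qed
qed

lemma td_cbox:
  fixes a :: "'a::euclidean_space"
  assumes "r > 0"
  shows "translate (dilate r (cbox 0 One)) a = cbox a (a + r *\<^sub>R One)"
proof -
  have ne: "cbox (0::'a) One \<noteq> {}" by (auto simp: box_ne_empty inner_Basis)
  have "dilate r (cbox (0::'a) One) = cbox 0 (r *\<^sub>R One)"
    unfolding dilate_def using image_smult_cbox[of r 0 One] ne assms by simp
  moreover have "(\<lambda>y. y + a) ` cbox 0 (r *\<^sub>R One) = cbox a (a + r *\<^sub>R One)"
    using cbox_translation[of a 0 "r *\<^sub>R One"] by (simp add: add.commute)
  ultimately show ?thesis unfolding translate_def by simp
qed

lemma is_cube_td:
  fixes Q :: "'a::euclidean_space set"
  assumes "is_cube Q"
  obtains a r where "r > 0" "Q = translate (dilate r (cbox 0 One)) a"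
    "measure lebesgue Q = r ^ DIM('a)"
proof -
  obtain a r where ar: "r > 0" "Q = cbox a (a + r *\<^sub>R One)" using assms unfolding is_cube_def by blast
  have "measure lebesgue Q = measure lborel Q"
    unfolding ar(2) by (simp add: measure_completion)
  also have "\<dots> = (\<Prod>i\<in>Basis. (a + r *\<^sub>R One) \<bullet> i - a \<bullet> i)"
    unfolding ar(2) using ar(1) by (intro content_cbox) (auto simp: inner_simps)
  also have "\<dots> = r ^ DIM('a)" by (simp add: inner_simps)
  finally have M: "measure lebesgue Q = r ^ DIM('a)" .
  show ?thesis
  proof (rule that[OF ar(1) _ M])
    show "Q = translate (dilate r (cbox 0 One)) a" using ar(2) td_cbox[OF ar(1), of a] by simp
  qed
qed

lemma is_cube_cbox: "r > 0 \<Longrightarrow> is_cube (cbox a (a + r *\<^sub>R One))"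
  unfolding is_cube_def by blast

lemma is_cube_td': "r > 0 \<Longrightarrow> is_cube (translate (dilate r (cbox 0 (One::'a::euclidean_space))) a)"
  using td_cbox is_cube_cbox by metis

lemma is_cube_d': "r > 0 \<Longrightarrow> is_cube (dilate r (cbox 0 (One::'a::euclidean_space)))"
  using is_cube_td'[of r 0] by (simp add: translate_def)

lemma is_cube_Q0: "is_cube (cbox 0 (One::'a::euclidean_space))"
  using is_cube_cbox[of 1 0] by simp

definition vT :: "'a::euclidean_space set \<Rightarrow> 'a" where
  "vT T = (1/2) *\<^sub>R (\<Sum>b\<in>T. b)"

lemma vT_inner: "T \<subseteq> Basis \<Longrightarrow> i \<in> Basis \<Longrightarrow> vT T \<bullet> i = (if i \<in> T then 1/2 else 0)"
proof -
  assume T: "T \<subseteq> Basis" and i: "i \<in> Basis"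
  have fT: "finite T" using finite_subset[OF T finite_Basis] .
  have "(\<Sum>b\<in>T. b \<bullet> i) = (\<Sum>b\<in>T. if b = i then 1 else 0)"
    using T i by (intro sum.cong) (auto simp: inner_Basis)
  also have "\<dots> = (if i \<in> T then 1 else 0)" using fT by (simp add: sum.delta')
  finally show ?thesis unfolding vT_def by (simp add: inner_sum_left)
qed

definition halfcube :: "'a::euclidean_space set \<Rightarrow> 'a set" where
  "halfcube T = cbox (vT T) (vT T + (1/2) *\<^sub>R One)"

lemma halfcube_disj:
  assumes "T \<subseteq> Basis" "T' \<subseteq> Basis" "T \<noteq> T'"
  shows "interior (halfcube T) \<inter> interior (halfcube T') = {}"
proof (rule ccontr)
  assume "interior (halfcube T) \<inter> interior (halfcube T') \<noteq> {}"
  then obtain x where x: "x \<in> box (vT T) (vT T + (1/2) *\<^sub>R One)" "x \<in> box (vT T') (vT T' + (1/2) *\<^sub>R One)"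
    unfolding halfcube_def by auto
  have iff: "i \<in> T \<longleftrightarrow> i \<in> T'" if "i \<in> Basis" for i
    using x that vT_inner[OF assms(1) that] vT_inner[OF assms(2) that]
    unfolding mem_box by (auto simp: inner_simps split: if_splits dest!: bspec[OF _ that])
  have "T \<subseteq> T'" proof fix i assume "i \<in> T" thus "i \<in> T'" using iff[of i] assms(1) by auto qed
  moreover have "T' \<subseteq> T" proof fix i assume "i \<in> T'" thus "i \<in> T" using iff[of i] assms(2) by auto qed
  ultimately have "T = T'" by (rule subset_antisym)
  thus False using assms by simp
qed

lemma halfcube_Union: "(\<Union>T\<in>Pow Basis. halfcube T) = cbox 0 (One::'a::euclidean_space)"
proof
  show "(\<Union>T\<in>Pow Basis. halfcube T) \<subseteq> cbox 0 (One::'a)"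
  proof (clarsimp simp: halfcube_def mem_box)
    fix T :: "'a set" and x :: 'a and i :: 'a assume T: "T \<subseteq> Basis" and
      h: "\<forall>i\<in>Basis. vT T \<bullet> i \<le> x \<bullet> i \<and> x \<bullet> i \<le> (vT T + (1/2) *\<^sub>R One) \<bullet> i" and i: "i \<in> Basis"
    show "0 \<le> x \<bullet> i \<and> x \<bullet> i \<le> 1"
      using h[rule_format, OF i] vT_inner[OF T i] i by (auto simp: inner_simps split: if_splits)
  qed
  show "cbox 0 (One::'a) \<subseteq> (\<Union>T\<in>Pow Basis. halfcube T)"
  proof
    fix x :: 'a assume x: "x \<in> cbox 0 One"
    define T where "T = {i\<in>Basis. x \<bullet> i \<ge> 1/2}"
    have T: "T \<subseteq> Basis" unfolding T_def by auto
    have "x \<in> halfcube T" unfolding halfcube_def mem_box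
    proof (intro ballI)
      fix i :: 'a assume i: "i \<in> Basis"
      show "vT T \<bullet> i \<le> x \<bullet> i \<and> x \<bullet> i \<le> (vT T + (1/2) *\<^sub>R One) \<bullet> i"
        using x i vT_inner[OF T i] unfolding mem_box T_def by (auto simp: inner_simps)
    qed
    thus "x \<in> (\<Union>T\<in>Pow Basis. halfcube T)" using T by auto
  qed
qed

lemma halfcube_td: "halfcube T = translate (dilate (1/2) (cbox 0 One)) (vT T)"
  unfolding halfcube_def using td_cbox[of "1/2" "vT T"] by simp


theorem mainTheorem3:
  fixes E :: "nat \<Rightarrow> 'a::euclidean_space set \<Rightarrow> real" and s :: real and q :: nat
  assumes s_pos: "s > 0"
    and nonneg: "\<And>n Q. is_cube Q \<Longrightarrow> E n Q \<ge> 0"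
    and scaling: "\<And>n Q l. is_cube Q \<Longrightarrow> l > 0 \<Longrightarrow> E n (dilate l Q) = l powr (-2 * s) * E n Q"
    and transl: "\<And>n Q x. is_cube Q \<Longrightarrow> E n (translate Q x) = E n Q"
    and superadd: "\<And>n (J::nat) Qs. (\<forall>j<J. is_cube (Qs j)) \<Longrightarrow>
         (\<forall>i<J. \<forall>j<J. i \<noteq> j \<longrightarrow> interior (Qs i) \<inter> interior (Qs j) = {}) \<Longrightarrow>
         is_cube (\<Union>j<J. Qs j) \<Longrightarrow>
         E n (\<Union>j<J. Qs j) \<ge> Min {(\<Sum>j<J. E (ns j) (Qs j)) | ns. (\<Sum>j<J. ns j) = n}"
    and pos: "\<forall>n\<ge>q. \<forall>Q. is_cube Q \<longrightarrow> E n Q > 0"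
  shows "(\<exists>C>0. \<forall>n\<ge>q. \<forall>Q. is_cube Q \<longrightarrow>
       E n Q \<ge> C * measure lebesgue Q powr (-2 * s / DIM('a)) * real n powr (1 + 2 * s / DIM('a)))"
proof -
  define Q0 :: "'a set" where "Q0 = cbox 0 One"
  define f where "f n = E n Q0" for n
  define d where "d = DIM('a)"
  define m where "m = (2::nat) ^ d"
  define \<alpha> where "\<alpha> = 1 + 2 * s / real d"
  have d1: "d \<ge> 1" unfolding d_def by (simp add: DIM_positive Suc_leI)
  have Q0c: "is_cube Q0" unfolding Q0_def by (rule is_cube_Q0)
  have scale_cube: "E n (translate (dilate r Q0) a) = r powr (-2 * s) * f n" if "r > 0" for n r a
    using transl[OF is_cube_d'[OF that], of n a] scaling[OF Q0c that, of n]
    unfolding f_def Q0_def by simp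
  have Kq: "real m powr (\<alpha> - 1) = 2 powr (2 * s)"
  proof -
    have "real m = 2 powr real d" unfolding m_def by (simp add: powr_realpow)
    hence "real m powr (\<alpha> - 1) = 2 powr (real d * (2 * s / real d))"
      unfolding \<alpha>_def by (simp add: powr_powr)
    thus ?thesis using d1 by simp
  qed
  have half: "E k (halfcube T) = 2 powr (2 * s) * f k" for k and T :: "'a set"
  proof -
    have "E k (halfcube T) = (1/2) powr (-2 * s) * f k"
      unfolding halfcube_td using scale_cube[of "1/2" k "vT T"] unfolding Q0_def by simp
    also have "(1/2::real) powr (-2 * s) = 2 powr (2 * s)"
      by (simp add: powr_divide powr_minus_divide)
    finally show ?thesis .
  qed
  have hc_cube: "is_cube (halfcube T)" for T :: "'a set"
    unfolding halfcube_td by (rule is_cube_td') simp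
  obtain h :: "nat \<Rightarrow> 'a set" where h: "bij_betw h {0..<card (Pow (Basis::'a set))} (Pow (Basis::'a set))"
    using ex_bij_betw_nat_finite[OF finite_Pow_iff[THEN iffD2, OF finite_Basis]] by blast
  have cardP: "card (Pow (Basis::'a set)) = m" unfolding m_def d_def by (simp add: card_Pow)
  hence h': "bij_betw h {..<m} (Pow (Basis::'a set))" using h by (simp add: atLeast0LessThan)
  define Qs where "Qs j = halfcube (h j)" for j
  have rec: "\<exists>ns. (\<Sum>j<m. ns j) = n \<and> f n \<ge> real m powr (\<alpha> - 1) * (\<Sum>j<m. f (ns j))" for n
  proof -
    have cubes: "\<forall>j<m. is_cube (Qs j)" unfolding Qs_def using hc_cube by auto
    have disj: "\<forall>i<m. \<forall>j<m. i \<noteq> j \<longrightarrow> interior (Qs i) \<inter> interior (Qs j) = {}"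
    proof (intro allI impI)
      fix i j assume ij: "i < m" "j < m" "i \<noteq> j"
      have "h i \<noteq> h j" using h' ij unfolding bij_betw_def inj_on_def by auto
      moreover have "h i \<subseteq> Basis" "h j \<subseteq> Basis" using h' ij unfolding bij_betw_def by auto
      ultimately show "interior (Qs i) \<inter> interior (Qs j) = {}"
        unfolding Qs_def by (intro halfcube_disj) auto
    qed
    have un: "(\<Union>j<m. Qs j) = Q0"
    proof -
      have "(\<Union>j<m. Qs j) = (\<Union>T\<in>h ` {..<m}. halfcube T)" unfolding Qs_def by auto
      also have "h ` {..<m} = Pow Basis" using h' unfolding bij_betw_def by auto
      finally show ?thesis using halfcube_Union unfolding Q0_def by simp
    qed
    define A where "A = {(\<Sum>j<m. E (ns j) (Qs j)) | ns. (\<Sum>j<m. ns j) = n}"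
    have sa: "E n Q0 \<ge> Min A"
      using superadd[OF cubes disj, of n] un Q0c unfolding A_def by simp
    have "A \<subseteq> (\<lambda>ns. \<Sum>j<m. E (ns j) (Qs j)) ` (PiE {..<m} (\<lambda>_. {..n}))"
    proof
      fix x assume "x \<in> A"
      then obtain ns where ns: "x = (\<Sum>j<m. E (ns j) (Qs j))" "(\<Sum>j<m. ns j) = n" unfolding A_def by blast
      have "restrict ns {..<m} \<in> PiE {..<m} (\<lambda>_. {..n})"
      proof -
        have "ns j \<le> n" if "j < m" for j
          using member_le_sum[of j "{..<m}" ns] that ns(2) by auto
        thus ?thesis by auto
      qed
      moreover have "x = (\<Sum>j<m. E (restrict ns {..<m} j) (Qs j))" using ns(1) by simp
      ultimately show "x \<in> (\<lambda>ns. \<Sum>j<m. E (ns j) (Qs j)) ` (PiE {..<m} (\<lambda>_. {..n}))" by blast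
    qed
    hence finA: "finite A" by (rule finite_subset) (intro finite_imageI finite_PiE; simp)
    have m1: "m \<ge> 1" unfolding m_def by simp
    have "(\<Sum>j<m. E ((\<lambda>j. if j = 0 then n else 0) j) (Qs j)) \<in> A"
      unfolding A_def using m1 by (intro CollectI exI[of _ "\<lambda>j. if j = 0 then n else 0"]) (simp add: sum.delta)
    hence neA: "A \<noteq> {}" by blast
    have "Min A \<in> A" using finA neA by (rule Min_in)
    then obtain ns where ns: "Min A = (\<Sum>j<m. E (ns j) (Qs j))" "(\<Sum>j<m. ns j) = n" unfolding A_def by blast
    have "(\<Sum>j<m. E (ns j) (Qs j)) = real m powr (\<alpha> - 1) * (\<Sum>j<m. f (ns j))"
      unfolding Qs_def half Kq by (simp add: sum_distrib_left)
    thus ?thesis using sa ns unfolding f_def by auto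
  qed
  have m2: "m \<ge> 2" unfolding m_def using d1 by (metis one_le_numeral power_increasing power_one_right)
  have a1: "\<alpha> > 1" unfolding \<alpha>_def using s_pos d1 by simp
  obtain C where C: "C > 0" "\<And>n. n \<ge> q \<Longrightarrow> f n \<ge> C * real n powr \<alpha>"
    using abstract_bound[OF m2 a1, of f q] rec nonneg[OF Q0c] pos Q0c unfolding f_def by blast
  show ?thesis
  proof (intro exI[of _ C] conjI allI impI C(1))
    fix n Q assume n: "q \<le> n" and Q: "is_cube (Q::'a set)"
    obtain a r where ar: "r > 0" "Q = translate (dilate r (cbox 0 One)) a" "measure lebesgue Q = r ^ DIM('a)"
      using is_cube_td[OF Q] by blast
    have "measure lebesgue Q powr (-2 * s / DIM('a)) = r powr (-2 * s)"
    proof -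
      have "measure lebesgue Q = r powr real d" using ar(3) ar(1) unfolding d_def by (simp add: powr_realpow)
      hence "measure lebesgue Q powr (-2 * s / DIM('a)) = r powr (real d * (-2 * s / real d))"
        unfolding d_def by (simp add: powr_powr)
      thus ?thesis using d1 by simp
    qed
    moreover have "E n Q = r powr (-2 * s) * f n" using ar(2) scale_cube[OF ar(1)] unfolding Q0_def by simp
    moreover have "r powr (-2 * s) * f n \<ge> r powr (-2 * s) * (C * real n powr \<alpha>)"
      using C(2)[OF n] by (intro mult_left_mono) auto
    ultimately show "E n Q \<ge> C * measure lebesgue Q powr (-2 * s / DIM('a)) * real n powr (1 + 2 * s / DIM('a))"
      unfolding \<alpha>_def d_def by (simp add: algebra_simps)
  qed
qed

end
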